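(* Fix $-1<\xi_1<\xi_2<\xi_3<1$. As $(s,t)\to(0,0)$ with $s,t>0$, $$Q(s,t)-Q(0,0)=\frac{-1}{2\sqrt{1-\xi_2}\sqrt{1+\xi_2}\sqrt{\xi_3-\xi_2}}\,t\ln\frac1t+\frac{1}{2\sqrt{1-\xi_1}\sqrt{1+\xi_1}\sqrt{\xi_3-\xi_1}}\,s\ln\frac1s$$ $$\qquad+o\!\left(s\ln\frac1s\right)+o\!\left(t\ln\frac1t\right)+O(t)\,s\ln\frac1s+O\!\left(\frac{1}{\ln\frac1s}\right)t\ln\frac1t.$$
   Context: Fix $-1<\xi_1<\xi_2<\xi_3<1$. For real $y$, $\sqrt y$ denotes the principal branch: $\sqrt y\ge0$ for $y\ge0$ and $\sqrt y=i\sqrt{|y|}$ for $y<0$. For small $s,t\ge 0$ let $$g_{s,t}(x)=\frac{\sqrt{x-\xi_1+s}\,\sqrt{x-\xi_2+t}}{\sqrt{x-1}\sqrt{x+1}\sqrt{x-\xi_1}\sqrt{x-\xi_2}\sqrt{x-\xi_3}},$$ and define $A(s,t)=-i\int_{-\infty}^{-1}g_{s,t}\,dx$, $B(s,t)=-i\int_{\xi_1-s}^{\xi_1}g_{s,t}\,dx$, $C(s,t)=-i\int_{\xi_2-t}^{\xi_2}g_{s,t}\,dx$, $P(s,t)=-\int_{\xi_2}^{\xi_3}g_{s,t}\,dx$, $Q(s,t)=-\int_{\xi_1}^{\xi_2-t}g_{s,t}\,dx$, and $1/J(s,t)=\int_1^{\infty}g_{s,t}\,dx$ (all these are real). Notation: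 $h=O(g)$ means $|h/g|$ is bounded near $(0,0)$, and $h=o(g)$ means $h/g\to0$ as $(s,t)\to(0,0)$. *)

theory Defs
  imports "HOL-Analysis.Analysis"
begin

text \<open>Principal square root of a real number, as a complex number:
  csqrt y = sqrt y for y \<ge> 0 and csqrt y = i sqrt |y| for y < 0.\<close>
definition psqrt :: "real \<Rightarrow> complex" where
  "psqrt y = csqrt (complex_of_real y)"

definition gfun :: "real \<Rightarrow> real \<Rightarrow> real \<Rightarrow> real \<Rightarrow> real \<Rightarrow> real \<Rightarrow> complex" where
  "gfun \<xi>1 \<xi>2 \<xi>3 s t x =
     (psqrt (x - \<xi>1 + s) * psqrt (x - \<xi>2 + t)) /
     (psqrt (x - 1) * psqrt (x + 1) * psqrt (x - \<xi>1) * psqrt (x - \<xi>2) * psqrt (x - \<xi>3))"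

definition Qfun :: "real \<Rightarrow> real \<Rightarrow> real \<Rightarrow> real \<Rightarrow> real \<Rightarrow> complex" where
  "Qfun \<xi>1 \<xi>2 \<xi>3 s t = - integral {\<xi>1..\<xi>2 - t} (gfun \<xi>1 \<xi>2 \<xi>3 s t)"

end

theory Submission
  imports Defs "HOL-Real_Asymp.Real_Asymp"
begin

definition hh :: "real \<Rightarrow> real \<Rightarrow> real" where
  "hh \<xi>3 x = 1 / (sqrt (1 - x) * sqrt (1 + x) * sqrt (\<xi>3 - x))"
definition aa :: "real \<Rightarrow> real \<Rightarrow> real \<Rightarrow> real" where
  "aa \<xi>1 s x = sqrt (x - \<xi>1 + s) / sqrt (x - \<xi>1)"
definition bb :: "real \<Rightarrow> real \<Rightarrow> real \<Rightarrow> real" where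
  "bb \<xi>2 t x = sqrt (\<xi>2 - t - x) / sqrt (\<xi>2 - x)"

lemma psqrt_pos: "y > 0 \<Longrightarrow> psqrt y = of_real (sqrt y)"
  by (simp add: psqrt_def csqrt_of_real)
lemma psqrt_neg: "y < 0 \<Longrightarrow> psqrt y = \<i> * of_real (sqrt (-y))"
  by (simp add: psqrt_def csqrt_of_real')

lemma gfun_eval:
  assumes "-1 < \<xi>1" "\<xi>1 < \<xi>2" "\<xi>2 < \<xi>3" "\<xi>3 < 1" "0 \<le> s" "0 \<le> t" "\<xi>1 < x" "x < \<xi>2 - t"
  shows "gfun \<xi>1 \<xi>2 \<xi>3 s t x = - of_real (hh \<xi>3 x * aa \<xi>1 s x * bb \<xi>2 t x)"
proof -
  have e: "gfun \<xi>1 \<xi>2 \<xi>3 s t x = (of_real (sqrt (x - \<xi>1 + s)) * (\<i> * of_real (sqrt (\<xi>2 - t - x)))) /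
     ((\<i> * of_real (sqrt (1 - x))) * of_real (sqrt (x+1)) * of_real (sqrt (x - \<xi>1)) * (\<i> * of_real (sqrt (\<xi>2 - x))) * (\<i> * of_real (sqrt (\<xi>3 - x))))"
    unfolding gfun_def using assms
    by (simp add: psqrt_pos psqrt_neg)
  have p: "sqrt (1 - x) > 0" "sqrt (x+1) > 0" "sqrt (x - \<xi>1) > 0" "sqrt (\<xi>2 - x) > 0" "sqrt (\<xi>3 - x) > 0"
    using assms by auto
  show ?thesis unfolding e hh_def aa_def bb_def using p
    by (simp add: field_simps add.commute)
qed

lemma inv_sqrt_lip:
  fixes p q c :: real
  assumes "0 < c" "c \<le> p" "c \<le> q"
  shows "\<bar>1 / sqrt p - 1 / sqrt q\<bar> \<le> \<bar>p - q\<bar> / (c * sqrt c)"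
proof -
  have sp: "sqrt p \<ge> sqrt c" "sqrt q \<ge> sqrt c" using assms(2,3) by (simp_all add: real_sqrt_le_mono)
  have sc: "sqrt c > 0" using assms(1) by simp
  have "sqrt c * sqrt c \<le> sqrt p * sqrt q" by (rule mult_mono) (use sp sc in auto)
  then have pq: "sqrt p * sqrt q \<ge> c" using assms(1) by simp
  have d1: "\<bar>1 / sqrt p - 1 / sqrt q\<bar> = \<bar>sqrt q - sqrt p\<bar> / (sqrt p * sqrt q)"
    using sp sc by (simp add: field_simps)
  have d2: "\<bar>sqrt q - sqrt p\<bar> = \<bar>q - p\<bar> / (sqrt p + sqrt q)"
  proof -
    have "(sqrt q - sqrt p) * (sqrt p + sqrt q) = q - p" using assms
      by (simp add: algebra_simps)
    hence E: "\<bar>sqrt q - sqrt p\<bar> * \<bar>sqrt p + sqrt q\<bar> = \<bar>q - p\<bar>" by (metis abs_mult)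
    moreover have "sqrt p + sqrt q > 0" using sp sc by linarith
    ultimately show ?thesis by (simp add: eq_divide_eq)
  qed
  have s1: "sqrt c \<le> sqrt p + sqrt q" using sp sc by linarith
  have s2: "0 < (sqrt p + sqrt q) * sqrt c" using sp sc by (intro mult_pos_pos) linarith+
  have "\<bar>q - p\<bar> / (sqrt p + sqrt q) \<le> \<bar>q - p\<bar> / sqrt c"
    by (rule divide_left_mono[OF s1 _ s2]) simp
  hence "\<bar>sqrt q - sqrt p\<bar> \<le> \<bar>p - q\<bar> / sqrt c" using d2 by (simp add: abs_minus_commute)
  hence "\<bar>sqrt q - sqrt p\<bar> / (sqrt p * sqrt q) \<le> (\<bar>p - q\<bar> / sqrt c) / c"
    using pq assms(1) by (meson abs_ge_zero divide_mono order_trans)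
  thus ?thesis using d1 by (simp add: field_simps)
qed

lemma hh_props:
  assumes "-1 < \<xi>1" "\<xi>1 < \<xi>2" "\<xi>2 < \<xi>3" "\<xi>3 < 1"
  obtains H Lh where "\<And>x. x \<in> {\<xi>1..\<xi>2} \<Longrightarrow> 0 < hh \<xi>3 x \<and> hh \<xi>3 x \<le> H"
    "\<And>x y. x \<in> {\<xi>1..\<xi>2} \<Longrightarrow> y \<in> {\<xi>1..\<xi>2} \<Longrightarrow> \<bar>hh \<xi>3 x - hh \<xi>3 y\<bar> \<le> Lh * \<bar>x - y\<bar>"
    "0 \<le> Lh" "0 < H"
proof -
  define P where "P x = (1 - x) * (1 + x) * (\<xi>3 - x)" for x
  define c where "c = (1 - \<xi>2) * (1 + \<xi>1) * (\<xi>3 - \<xi>2)"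
  have c0: "c > 0" unfolding c_def using assms by auto
  have Pc: "P x \<ge> c" if "x \<in> {\<xi>1..\<xi>2}" for x
  proof -
    have "(1 - \<xi>2) * (1 + \<xi>1) \<le> (1 - x) * (1 + x)"
      using that assms by (intro mult_mono) auto
    thus ?thesis unfolding P_def c_def using that assms
      by (intro mult_mono) auto
  qed
  have hP: "hh \<xi>3 x = 1 / sqrt (P x)" if "x \<in> {\<xi>1..\<xi>2}" for x
    using that assms by (simp add: hh_def P_def real_sqrt_mult)
  have Pl: "\<bar>P x - P y\<bar> \<le> 6 * \<bar>x - y\<bar>" if "x \<in> {\<xi>1..\<xi>2}" "y \<in> {\<xi>1..\<xi>2}" for x y
  proof -
    have "P x - P y = (x - y) * (x*x + x*y + y*y - \<xi>3 * (x + y) - 1)"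
      unfolding P_def by (simp add: algebra_simps)
    moreover have "\<bar>x*x + x*y + y*y - \<xi>3 * (x + y) - 1\<bar> \<le> 6"
    proof -
      have b: "\<bar>x\<bar> \<le> 1" "\<bar>y\<bar> \<le> 1" "\<bar>\<xi>3\<bar> \<le> 1" using that assms by auto
      have q1: "\<bar>x*x\<bar> \<le> 1" "\<bar>x*y\<bar> \<le> 1" "\<bar>y*y\<bar> \<le> 1"
        using b by (metis abs_mult abs_ge_zero mult_le_one)+
      have "\<bar>x+y\<bar> \<le> 2" using b by linarith
      hence "\<bar>\<xi>3\<bar> * \<bar>x+y\<bar> \<le> 1 * 2" using b by (intro mult_mono) auto
      hence "\<bar>\<xi>3 * (x+y)\<bar> \<le> 2" by (simp add: abs_mult)
      thus ?thesis using q1 by linarith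
    qed
    ultimately show ?thesis by (simp add: abs_mult mult.commute mult_left_mono)
  qed
  show ?thesis
  proof (rule that[of "1 / sqrt c" "6 / (c * sqrt c)"])
    fix x assume x: "x \<in> {\<xi>1..\<xi>2}"
    show "0 < hh \<xi>3 x \<and> hh \<xi>3 x \<le> 1 / sqrt c"
    proof -
      have "sqrt c \<le> sqrt (P x)" "0 < sqrt c" using Pc[OF x] c0 by auto
      thus ?thesis unfolding hP[OF x] by (simp add: frac_le)
    qed
  next
    fix x y assume x: "x \<in> {\<xi>1..\<xi>2}" and y: "y \<in> {\<xi>1..\<xi>2}"
    have "\<bar>hh \<xi>3 x - hh \<xi>3 y\<bar> \<le> \<bar>P x - P y\<bar> / (c * sqrt c)"
      unfolding hP[OF x] hP[OF y] by (rule inv_sqrt_lip[OF c0 Pc[OF x] Pc[OF y]])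
    also have "\<dots> \<le> 6 * \<bar>x - y\<bar> / (c * sqrt c)"
      using Pl[OF x y] c0 by (intro divide_right_mono) auto
    finally show "\<bar>hh \<xi>3 x - hh \<xi>3 y\<bar> \<le> 6 / (c * sqrt c) * \<bar>x - y\<bar>" by simp
  next
    show "0 \<le> 6 / (c * sqrt c)" using c0 by simp
  next
    show "0 < 1 / sqrt c" using c0 by simp
  qed
qed

lemma der_sqrt_shift:
  assumes "0 < x + c"
  shows "((\<lambda>x. sqrt (x + c)) has_real_derivative inverse (sqrt (x + c)) / 2) (at x)"
proof -
  have "((\<lambda>x. x + c) has_real_derivative 1) (at x)"
    using DERIV_add[OF DERIV_ident DERIV_const[of c]] by simp
  from DERIV_chain'[OF this DERIV_real_sqrt[OF assms]] show ?thesis by simp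
qed

lemma algA:
  fixes p q s :: real
  assumes "p > 0" "q > 0" "q * q = p * p + s"
  shows "inverse p / 2 * q + inverse q / 2 * p + s * (1 / (p + q) * (inverse p / 2 + inverse q / 2)) - 1 = q / p - 1"
proof -
  have pq: "p + q > 0" using assms by simp
  have "inverse p / 2 * q + inverse q / 2 * p + s * (1 / (p + q) * (inverse p / 2 + inverse q / 2))
     = (q*q + p*p + s) / (2*p*q)"
    using assms pq by (simp add: field_simps)
  also have "\<dots> = (2*(q*q)) / (2*p*q)"
  proof -
    have "q*q + p*p + s = 2*(q*q)" using assms(3) by linarith
    thus ?thesis by (simp only:)
  qed
  also have "\<dots> = q / p" using assms(1,2) by (simp add: field_simps)
  finally show ?thesis by simp
qed

lemma derA:
  assumes "0 < s" "\<xi>1 < x"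
  shows "((\<lambda>x. sqrt (x + - \<xi>1) * sqrt (x + (s - \<xi>1)) + s * ln (sqrt (x + - \<xi>1) + sqrt (x + (s - \<xi>1))) - x)
     has_real_derivative (aa \<xi>1 s x - 1)) (at x)"
proof -
  define u where "u = x - \<xi>1"
  have u: "u > 0" using assms u_def by simp
  have su: "sqrt u > 0" "sqrt (u + s) > 0" using u assms by auto
  have d1: "((\<lambda>x. sqrt (x + - \<xi>1)) has_real_derivative inverse (sqrt u) / 2) (at x)"
    using der_sqrt_shift[of x "- \<xi>1"] assms u_def by simp
  have us: "x + (s - \<xi>1) = u + s" using u_def by simp
  have d2: "((\<lambda>x. sqrt (x + (s - \<xi>1))) has_real_derivative inverse (sqrt (u + s)) / 2) (at x)"
    using der_sqrt_shift[of x "s - \<xi>1"] u assms(1) unfolding us by simp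
  have d3: "((\<lambda>x. sqrt (x + - \<xi>1) + sqrt (x + (s - \<xi>1))) has_real_derivative
      inverse (sqrt u) / 2 + inverse (sqrt (u + s)) / 2) (at x)"
    by (rule DERIV_add[OF d1 d2])
  have ux: "x + - \<xi>1 = u" using u_def by simp
  have pos: "0 < sqrt (x + - \<xi>1) + sqrt (x + (s - \<xi>1))" unfolding ux us by (rule add_pos_pos[OF su])
  have d4: "((\<lambda>x. ln (sqrt (x + - \<xi>1) + sqrt (x + (s - \<xi>1)))) has_real_derivative
      1 / (sqrt u + sqrt (u + s)) * (inverse (sqrt u) / 2 + inverse (sqrt (u + s)) / 2)) (at x)"
    using DERIV_chain'[OF d3 DERIV_ln_divide[OF pos]] unfolding ux us by assumption
  note d5 = DERIV_diff[OF DERIV_add[OF DERIV_mult[OF d1 d2] DERIV_cmult[OF d4, of s]] DERIV_ident]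
  show ?thesis
  proof (rule DERIV_cong[OF d5])
    have e1: "sqrt (x + - \<xi>1) = sqrt u" "sqrt (x + (s - \<xi>1)) = sqrt (u + s)" using u_def by (simp_all add: algebra_simps)
    have e2: "sqrt u * sqrt u = u" "sqrt (u+s) * sqrt (u+s) = u + s" using u assms by simp_all
    show "inverse (sqrt u) / 2 * sqrt (x + (s - \<xi>1)) + inverse (sqrt (u + s)) / 2 * sqrt (x + - \<xi>1) +
        s * (1 / (sqrt u + sqrt (u + s)) * (inverse (sqrt u) / 2 + inverse (sqrt (u + s)) / 2)) - 1 = aa \<xi>1 s x - 1"
    proof -
      have "aa \<xi>1 s x = sqrt (u + s) / sqrt u" unfolding aa_def u_def by (simp add: algebra_simps)
      moreover have "sqrt (u + s) * sqrt (u + s) = sqrt u * sqrt u + s" using e2 by simp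
      ultimately show ?thesis unfolding e1 using algA[OF su] by simp
    qed
  qed
qed

lemma der_sqrt_neg:
  assumes "0 < c - x"
  shows "((\<lambda>x. sqrt (c - x)) has_real_derivative - (inverse (sqrt (c - x)) / 2)) (at x)"
proof -
  have "((\<lambda>x. c - x) has_real_derivative -1) (at x)"
    using DERIV_diff[OF DERIV_const[of c] DERIV_ident] by simp
  from DERIV_chain'[OF this DERIV_real_sqrt[OF assms]] show ?thesis by simp
qed

lemma derB:
  assumes "0 < t" "x < \<xi>2 - t"
  shows "((\<lambda>x. - (sqrt (\<xi>2 - x) * sqrt ((\<xi>2 - t) - x) - t * ln (sqrt (\<xi>2 - x) + sqrt ((\<xi>2 - t) - x))) - x)
     has_real_derivative (bb \<xi>2 t x - 1)) (at x)"
proof -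
  define p where "p = sqrt (\<xi>2 - x)"
  define q where "q = sqrt ((\<xi>2 - t) - x)"
  have pq: "p > 0" "q > 0" using assms unfolding p_def q_def by auto
  have d1: "((\<lambda>x. sqrt (\<xi>2 - x)) has_real_derivative - (inverse p / 2)) (at x)"
    unfolding p_def by (rule der_sqrt_neg) (use assms in simp)
  have d2: "((\<lambda>x. sqrt ((\<xi>2 - t) - x)) has_real_derivative - (inverse q / 2)) (at x)"
    unfolding q_def by (rule der_sqrt_neg) (use assms in simp)
  note d3 = DERIV_add[OF d1 d2]
  have pos: "0 < sqrt (\<xi>2 - x) + sqrt ((\<xi>2 - t) - x)" unfolding p_def[symmetric] q_def[symmetric]
    by (rule add_pos_pos[OF pq])
  have d4: "((\<lambda>x. ln (sqrt (\<xi>2 - x) + sqrt ((\<xi>2 - t) - x))) has_real_derivative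
      1 / (p + q) * (- (inverse p / 2) + - (inverse q / 2))) (at x)"
    using DERIV_chain'[OF d3 DERIV_ln_divide[OF pos]] unfolding p_def q_def by assumption
  note d5 = DERIV_diff[OF DERIV_minus[OF DERIV_diff[OF DERIV_mult[OF d1 d2] DERIV_cmult[OF d4, of t]]] DERIV_ident]
  show ?thesis
  proof (rule DERIV_cong[OF d5])
    have e: "sqrt (\<xi>2 - x) = p" "sqrt ((\<xi>2 - t) - x) = q" using p_def q_def by simp_all
    have b: "bb \<xi>2 t x = q / p" unfolding bb_def p_def q_def by simp
    have qq: "q * q = p * p + - t" unfolding p_def q_def using assms by simp
    show "- (- (inverse p / 2) * sqrt (\<xi>2 - t - x) + - (inverse q / 2) * sqrt (\<xi>2 - x) -
        t * (1 / (p + q) * (- (inverse p / 2) + - (inverse q / 2)))) - 1 = bb \<xi>2 t x - 1"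
      unfolding e b using algA[OF pq qq] by (simp add: algebra_simps)
  qed
qed

lemma intA:
  assumes "0 < s" "\<xi>1 < m"
  shows "((\<lambda>x. aa \<xi>1 s x - 1) has_integral
     (s / 2 * ln (1 / s) + (sqrt (m - \<xi>1) * sqrt (m - \<xi>1 + s) - (m - \<xi>1) + s * ln (sqrt (m - \<xi>1) + sqrt (m - \<xi>1 + s))))) {\<xi>1..m}"
proof -
  define F where "F = (\<lambda>x. sqrt (x + - \<xi>1) * sqrt (x + (s - \<xi>1)) + s * ln (sqrt (x + - \<xi>1) + sqrt (x + (s - \<xi>1))) - x)"
  have pos: "sqrt (x + - \<xi>1) + sqrt (x + (s - \<xi>1)) \<noteq> 0" if "x \<in> {\<xi>1..m}" for x
  proof -
    have "sqrt (x + (s - \<xi>1)) > 0" using that assms by simp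
    moreover have "sqrt (x + - \<xi>1) \<ge> 0" using that by simp
    ultimately show ?thesis by linarith
  qed
  have cont: "continuous_on {\<xi>1..m} F"
    unfolding F_def by (intro continuous_intros) (use pos in auto)
  have "((\<lambda>x. aa \<xi>1 s x - 1) has_integral (F m - F \<xi>1)) {\<xi>1..m}"
    apply (rule fundamental_theorem_of_calculus_interior[OF _ cont])
    using assms apply simp
    unfolding F_def has_real_derivative_iff_has_vector_derivative[symmetric]
    by (rule derA) (use assms in auto)
  moreover have "F m - F \<xi>1 = s / 2 * ln (1 / s) + (sqrt (m - \<xi>1) * sqrt (m - \<xi>1 + s) - (m - \<xi>1) + s * ln (sqrt (m - \<xi>1) + sqrt (m - \<xi>1 + s)))"
    using assms unfolding F_def by (simp add: ln_sqrt ln_div algebra_simps)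
  ultimately show ?thesis by simp
qed

lemma intB:
  assumes "0 < t" "m < \<xi>2 - t"
  shows "((\<lambda>x. bb \<xi>2 t x - 1) has_integral
     (- (t / 2 * ln (1 / t)) + (t + sqrt (\<xi>2 - m) * sqrt (\<xi>2 - m - t) - (\<xi>2 - m) - t * ln (sqrt (\<xi>2 - m) + sqrt (\<xi>2 - m - t))))) {m..\<xi>2 - t}"
proof -
  define G where "G = (\<lambda>x. - (sqrt (\<xi>2 - x) * sqrt ((\<xi>2 - t) - x) - t * ln (sqrt (\<xi>2 - x) + sqrt ((\<xi>2 - t) - x))) - x)"
  have pos: "sqrt (\<xi>2 - x) + sqrt ((\<xi>2 - t) - x) \<noteq> 0" if "x \<in> {m..\<xi>2 - t}" for x
  proof -
    have "sqrt (\<xi>2 - x) > 0" using that assms by simp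
    moreover have "sqrt ((\<xi>2 - t) - x) \<ge> 0" using that by simp
    ultimately show ?thesis by linarith
  qed
  have cont: "continuous_on {m..\<xi>2 - t} G"
    unfolding G_def by (intro continuous_intros) (use pos in auto)
  have "((\<lambda>x. bb \<xi>2 t x - 1) has_integral (G (\<xi>2 - t) - G m)) {m..\<xi>2 - t}"
    apply (rule fundamental_theorem_of_calculus_interior[OF _ cont])
    using assms apply simp
    unfolding G_def has_real_derivative_iff_has_vector_derivative[symmetric]
    by (rule derB) (use assms in auto)
  moreover have "G (\<xi>2 - t) - G m = - (t / 2 * ln (1 / t)) + (t + sqrt (\<xi>2 - m) * sqrt (\<xi>2 - m - t) - (\<xi>2 - m) - t * ln (sqrt (\<xi>2 - m) + sqrt (\<xi>2 - m - t)))"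
    using assms unfolding G_def by (simp add: ln_sqrt ln_div algebra_simps)
  ultimately show ?thesis by simp
qed

lemma int_bound_Ioo:
  fixes f g :: "real \<Rightarrow> real"
  assumes "f integrable_on {a..b}" "g integrable_on {a..b}" "\<And>x. x \<in> {a<..<b} \<Longrightarrow> \<bar>f x\<bar> \<le> g x"
  shows "\<bar>integral {a..b} f\<bar> \<le> integral {a..b} g"
proof -
  have fi: "(f has_integral integral {a..b} f) {a<..<b}"
    using has_integral_Icc_iff_Ioo assms(1) by blast
  have gi: "(g has_integral integral {a..b} g) {a<..<b}"
    using has_integral_Icc_iff_Ioo assms(2) by blast
  have "norm (integral {a<..<b} f) \<le> integral {a<..<b} g"
    by (rule integral_norm_bound_integral) (use fi gi assms(3) in auto)
  thus ?thesis using integral_unique[OF fi] integral_unique[OF gi] by simp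
qed

lemma int_bound_const:
  fixes f :: "real \<Rightarrow> real"
  assumes "f integrable_on {a..b}" "a \<le> b" "\<And>x. x \<in> {a<..<b} \<Longrightarrow> \<bar>f x\<bar> \<le> c"
  shows "\<bar>integral {a..b} f\<bar> \<le> c * (b - a)"
  using int_bound_Ioo[OF assms(1) integrable_const_ivl[of c a b] assms(3)] assms(2) by (simp add: mult.commute)

lemma int_prod:
  fixes \<phi> g :: "real \<Rightarrow> real"
  assumes "continuous_on {a..b} \<phi>" "g integrable_on {a..b}" "\<And>x. x \<in> {a<..<b} \<Longrightarrow> 0 \<le> g x"
  shows "(\<lambda>x. \<phi> x * g x) integrable_on {a..b}"
proof -
  have gi: "g integrable_on {a<..<b}" using assms(2) integrable_on_Icc_iff_Ioo by blast
  have ga: "g absolutely_integrable_on {a<..<b}"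
    by (rule nonnegative_absolutely_integrable_1[OF gi]) (use assms(3) in auto)
  have cS: "continuous_on {a<..<b} \<phi>" using assms(1) by (rule continuous_on_subset) auto
  have meas: "\<phi> \<in> borel_measurable (lebesgue_on {a<..<b})"
    by (rule continuous_imp_measurable_on_sets_lebesgue[OF cS]) simp
  have "bounded (\<phi> ` {a..b})"
    by (intro compact_imp_bounded compact_continuous_image assms(1)) simp
  hence bd: "bounded (\<phi> ` {a<..<b})" by (rule bounded_subset) auto
  have "(\<lambda>x. \<phi> x * g x) absolutely_integrable_on {a<..<b}"
    by (rule absolutely_integrable_bounded_measurable_product_real[OF meas _ bd ga]) simp
  hence "(\<lambda>x. \<phi> x * g x) integrable_on {a<..<b}" using set_lebesgue_integral_eq_integral(1) by blast
  thus ?thesis using integrable_on_Icc_iff_Ioo by blast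
qed

lemma a_bounds:
  fixes u s :: real
  assumes "0 < u" "0 \<le> s"
  shows "1 \<le> sqrt (u + s) / sqrt u" "sqrt (u + s) / sqrt u - 1 \<le> s / (2 * u)"
proof -
  have su: "sqrt u > 0" using assms by simp
  have le: "sqrt u \<le> sqrt (u + s)" using assms by simp
  show "1 \<le> sqrt (u + s) / sqrt u" using su le by simp
  have "(sqrt (u + s) - sqrt u) * (sqrt (u + s) + sqrt u) = s" using assms by (simp add: algebra_simps)
  moreover have "sqrt (u + s) + sqrt u \<noteq> 0" using su le by linarith
  ultimately have "sqrt (u + s) - sqrt u = s / (sqrt (u + s) + sqrt u)"
    by (simp add: eq_divide_eq)
  also have "\<dots> \<le> s / (2 * sqrt u)"
  proof (rule divide_left_mono)
    show "2 * sqrt u \<le> sqrt (u + s) + sqrt u" using le by linarith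
    show "0 < (sqrt (u + s) + sqrt u) * (2 * sqrt u)" using su le by (intro mult_pos_pos) linarith+
  qed (use assms in simp)
  finally have "sqrt (u + s) - sqrt u \<le> s / (2 * sqrt u)" .
  hence "(sqrt (u + s) - sqrt u) / sqrt u \<le> s / (2 * sqrt u) / sqrt u" using su by (intro divide_right_mono) auto
  moreover have "(sqrt (u + s) - sqrt u) / sqrt u = sqrt (u + s) / sqrt u - 1" using su by (simp add: field_simps)
  moreover have "s / (2 * sqrt u) / sqrt u = s / (2 * u)"
  proof -
    have "sqrt u * sqrt u = u" using assms by simp
    thus ?thesis by (simp add: divide_divide_eq_left mult.assoc)
  qed
  ultimately show "sqrt (u + s) / sqrt u - 1 \<le> s / (2 * u)" by linarith
qed

lemma b_bounds:
  fixes v t :: real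
  assumes "0 \<le> t" "t < v"
  shows "0 \<le> sqrt (v - t) / sqrt v" "sqrt (v - t) / sqrt v \<le> 1" "1 - sqrt (v - t) / sqrt v \<le> t / v"
proof -
  have sv: "sqrt v > 0" using assms by simp
  have le: "sqrt (v - t) \<le> sqrt v" using assms by simp
  have ge: "0 \<le> sqrt (v - t)" using assms by simp
  show "0 \<le> sqrt (v - t) / sqrt v" using sv ge by simp
  show "sqrt (v - t) / sqrt v \<le> 1" using sv le by simp
  have "(sqrt v - sqrt (v - t)) * (sqrt v + sqrt (v - t)) = t" using assms by (simp add: algebra_simps)
  moreover have "sqrt v + sqrt (v - t) \<noteq> 0" using sv ge by linarith
  ultimately have "sqrt v - sqrt (v - t) = t / (sqrt v + sqrt (v - t))"
    by (simp add: eq_divide_eq)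
  also have "\<dots> \<le> t / sqrt v"
  proof (rule divide_left_mono)
    show "sqrt v \<le> sqrt v + sqrt (v - t)" using ge by linarith
    show "0 < (sqrt v + sqrt (v - t)) * sqrt v" using sv ge by (intro mult_pos_pos) linarith+
  qed (use assms in simp)
  finally have "sqrt v - sqrt (v - t) \<le> t / sqrt v" .
  hence "(sqrt v - sqrt (v - t)) / sqrt v \<le> t / sqrt v / sqrt v" using sv by (intro divide_right_mono) auto
  moreover have "(sqrt v - sqrt (v - t)) / sqrt v = 1 - sqrt (v - t) / sqrt v" using sv by (simp add: field_simps)
  moreover have "t / sqrt v / sqrt v = t / v"
  proof -
    have "sqrt v * sqrt v = v" using assms by simp
    thus ?thesis by (simp add: divide_divide_eq_left)
  qed
  ultimately show "1 - sqrt (v - t) / sqrt v \<le> t / v" by linarith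
qed

lemma abs_ln_between:
  fixes X lo hi :: real
  assumes "0 < lo" "lo \<le> X" "X \<le> hi"
  shows "\<bar>ln X\<bar> \<le> \<bar>ln lo\<bar> + \<bar>ln hi\<bar>"
proof -
  have "ln lo \<le> ln X" using assms by simp
  moreover have "ln X \<le> ln hi" using assms by simp
  ultimately show ?thesis by linarith
qed

lemma s_ln_le:
  fixes s :: real
  assumes "0 < s"
  shows "s * ln (1 / s) \<le> 1"
proof -
  have "ln (1 / s) \<le> 1 / s - 1" using assms by (intro ln_le_minus_one) simp
  hence "s * ln (1 / s) \<le> s * (1 / s - 1)" using assms by (intro mult_left_mono) auto
  also have "\<dots> = 1 - s" using assms by (simp add: field_simps)
  finally show ?thesis using assms by linarith
qed

lemma RA_bound:
  fixes s L :: real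
  assumes "0 < s" "s < 1" "0 < L"
  shows "\<bar>sqrt L * sqrt (L + s) - L + s * ln (sqrt L + sqrt (L + s))\<bar>
    \<le> s * (1 / 2 + (\<bar>ln (sqrt L)\<bar> + \<bar>ln (2 * sqrt (L + 1))\<bar>))"
proof -
  have e: "sqrt L * sqrt (L + s) = sqrt (L * (L + s))" using assms by (simp add: real_sqrt_mult)
  have "L * L \<le> L * (L + s)" using assms by simp
  hence "sqrt (L * L) \<le> sqrt (L * (L + s))" by (rule real_sqrt_le_mono)
  hence l1: "L \<le> sqrt L * sqrt (L + s)" unfolding e using assms by simp
  have "L * (L + s) \<le> (L + s / 2) * (L + s / 2)" by (simp add: algebra_simps)
  hence "sqrt (L * (L + s)) \<le> sqrt ((L + s / 2) * (L + s / 2))" by (rule real_sqrt_le_mono)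
  moreover have "sqrt ((L + s / 2) * (L + s / 2)) = L + s / 2"
  proof -
    have "0 \<le> L + s" "0 < L + s / 2" using assms by linarith+
    thus ?thesis using real_sqrt_abs2[of "L + s / 2"] by simp
  qed
  ultimately have l2: "sqrt L * sqrt (L + s) \<le> L + s / 2" using e by linarith
  have X1: "sqrt L \<le> sqrt L + sqrt (L + s)" using assms by simp
  have "sqrt (L + s) \<le> sqrt (L + 1)" "sqrt L \<le> sqrt (L + 1)" using assms by simp_all
  hence X2: "sqrt L + sqrt (L + s) \<le> 2 * sqrt (L + 1)" by linarith
  have lnb: "\<bar>ln (sqrt L + sqrt (L + s))\<bar> \<le> \<bar>ln (sqrt L)\<bar> + \<bar>ln (2 * sqrt (L + 1))\<bar>"
    by (rule abs_ln_between[OF _ X1 X2]) (use assms in simp)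
  have "\<bar>s * ln (sqrt L + sqrt (L + s))\<bar> \<le> s * (\<bar>ln (sqrt L)\<bar> + \<bar>ln (2 * sqrt (L + 1))\<bar>)"
    unfolding abs_mult using assms lnb by (simp add: mult_left_mono)
  thus ?thesis using l1 l2 by (simp add: algebra_simps)
qed

lemma RB_bound:
  fixes t L :: real
  assumes "0 < t" "t < L"
  shows "\<bar>t + sqrt L * sqrt (L - t) - L - t * ln (sqrt L + sqrt (L - t))\<bar>
    \<le> t * (2 + (\<bar>ln (sqrt L)\<bar> + \<bar>ln (2 * sqrt L)\<bar>))"
proof -
  have e: "sqrt L * sqrt (L - t) = sqrt (L * (L - t))" using assms by (simp add: real_sqrt_mult)
  have "(L - t) * (L - t) \<le> L * (L - t)" using assms by (intro mult_right_mono) auto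
  hence "sqrt ((L - t) * (L - t)) \<le> sqrt (L * (L - t))" by (rule real_sqrt_le_mono)
  hence l1: "L - t \<le> sqrt L * sqrt (L - t)" unfolding e using assms by simp
  have "L * (L - t) \<le> L * L" using assms by simp
  hence "sqrt (L * (L - t)) \<le> sqrt (L * L)" by (rule real_sqrt_le_mono)
  hence l2: "sqrt L * sqrt (L - t) \<le> L" unfolding e using assms by simp
  have X1: "sqrt L \<le> sqrt L + sqrt (L - t)" using assms by simp
  have "sqrt (L - t) \<le> sqrt L" using assms by simp
  hence X2: "sqrt L + sqrt (L - t) \<le> 2 * sqrt L" by linarith
  have lnb: "\<bar>ln (sqrt L + sqrt (L - t))\<bar> \<le> \<bar>ln (sqrt L)\<bar> + \<bar>ln (2 * sqrt L)\<bar>"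
    by (rule abs_ln_between[OF _ X1 X2]) (use assms in simp)
  have "\<bar>t * ln (sqrt L + sqrt (L - t))\<bar> \<le> t * (\<bar>ln (sqrt L)\<bar> + \<bar>ln (2 * sqrt L)\<bar>)"
    unfolding abs_mult using assms lnb by (simp add: mult_left_mono)
  thus ?thesis using l1 l2 by (simp add: algebra_simps)
qed

lemma hh_cont:
  assumes "-1 < \<xi>1" "\<xi>1 < \<xi>2" "\<xi>2 < \<xi>3" "\<xi>3 < 1" "\<xi>1 \<le> c" "d \<le> \<xi>2"
  shows "continuous_on {c..d} (hh \<xi>3)"
proof -
  have "continuous_on {c..d} (\<lambda>x. 1 / (sqrt (1 - x) * sqrt (1 + x) * sqrt (\<xi>3 - x)))"
    by (intro continuous_intros) (use assms in auto)
  thus ?thesis unfolding hh_def[abs_def] .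
qed

lemma left_part:
  assumes xi: "-1 < \<xi>1" "\<xi>1 < \<xi>2" "\<xi>2 < \<xi>3" "\<xi>3 < 1"
    and hb: "\<And>x. x \<in> {\<xi>1..\<xi>2} \<Longrightarrow> 0 < hh \<xi>3 x \<and> hh \<xi>3 x \<le> H"
    and hl: "\<And>x y. x \<in> {\<xi>1..\<xi>2} \<Longrightarrow> y \<in> {\<xi>1..\<xi>2} \<Longrightarrow> \<bar>hh \<xi>3 x - hh \<xi>3 y\<bar> \<le> Lh * \<bar>x - y\<bar>"
    and Lh: "0 \<le> Lh"
    and m: "m = (\<xi>1 + \<xi>2) / 2" and L: "L = (\<xi>2 - \<xi>1) / 2"
    and st: "0 < s" "s < 1" "0 < t" "t < L"
  shows "\<exists>EL. ((\<lambda>x. hh \<xi>3 x * aa \<xi>1 s x * bb \<xi>2 t x) has_integral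
      (integral {\<xi>1..m} (hh \<xi>3) + hh \<xi>3 \<xi>1 * (s / 2 * ln (1 / s) + (sqrt L * sqrt (L + s) - L + s * ln (sqrt L + sqrt (L + s)))) + EL)) {\<xi>1..m}
    \<and> \<bar>EL\<bar> \<le> (Lh * L / 2 + H / L * (1 + (\<bar>ln (sqrt L)\<bar> + \<bar>ln (2 * sqrt (L + 1))\<bar>)) + H) * (s + t)"
proof -
  define h where "h = hh \<xi>3"
  define a where "a = aa \<xi>1 s"
  define b where "b = bb \<xi>2 t"
  define h1 where "h1 = h \<xi>1"
  define RA where "RA = sqrt L * sqrt (L + s) - L + s * ln (sqrt L + sqrt (L + s))"
  define CA where "CA = \<bar>ln (sqrt L)\<bar> + \<bar>ln (2 * sqrt (L + 1))\<bar>"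
  define IA where "IA = s / 2 * ln (1 / s) + RA"
  have L0: "0 < L" using L xi by simp
  have mL: "m - \<xi>1 = L" "\<xi>2 - m = L" using m L by simp_all
  have mle: "\<xi>1 \<le> m" "m \<le> \<xi>2" using m xi by simp_all
  have H0: "0 < H" using hb[of \<xi>1] xi by force
  have CA0: "0 \<le> CA" unfolding CA_def by simp
  have IAi: "((\<lambda>x. a x - 1) has_integral IA) {\<xi>1..m}"
  proof -
    have "\<xi>1 < m" using m xi by simp
    from intA[OF st(1) this] show ?thesis unfolding IA_def RA_def a_def mL(1) by simp
  qed
  have ai: "(\<lambda>x. a x - 1) integrable_on {\<xi>1..m}" using IAi by blast
  have pt: "1 \<le> a x \<and> a x - 1 \<le> s / (2 * (x - \<xi>1)) \<and> 0 \<le> b x \<and> b x \<le> 1 \<and> 1 - b x \<le> t / L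
      \<and> 0 < h x \<and> h x \<le> H \<and> \<bar>h x - h1\<bar> \<le> Lh * (x - \<xi>1)" if x: "x \<in> {\<xi>1<..<m}" for x
  proof -
    have u: "0 < x - \<xi>1" using x by simp
    have ab: "1 \<le> a x" "a x - 1 \<le> s / (2 * (x - \<xi>1))"
      unfolding a_def aa_def using a_bounds[OF u, of s] st by auto
    have v: "t < \<xi>2 - x" "L \<le> \<xi>2 - x" using x mL st by auto
    have e: "\<xi>2 - t - x = \<xi>2 - x - t" by simp
    have bb: "0 \<le> b x" "b x \<le> 1" "1 - b x \<le> t / (\<xi>2 - x)"
      unfolding b_def bb_def e using b_bounds[of t "\<xi>2 - x"] v st by auto
    have "t / (\<xi>2 - x) \<le> t / L" using v L0 st by (intro divide_left_mono) auto
    moreover have xr: "x \<in> {\<xi>1..\<xi>2}" "\<xi>1 \<in> {\<xi>1..\<xi>2}" using x mle xi by auto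
    moreover have "\<bar>h x - h1\<bar> \<le> Lh * (x - \<xi>1)" unfolding h_def h1_def using hl[OF xr] u by simp
    ultimately show ?thesis using ab bb hb[OF xr(1)] unfolding h_def by auto
  qed
  have hc: "continuous_on {\<xi>1..m} h" unfolding h_def by (rule hh_cont[OF xi]) (use mle in auto)
  have bc: "continuous_on {\<xi>1..m} b"
  proof -
    have "continuous_on {\<xi>1..m} (\<lambda>x. sqrt (\<xi>2 - t - x) / sqrt (\<xi>2 - x))"
      by (intro continuous_intros) (use mle st mL in auto)
    thus ?thesis unfolding b_def bb_def[abs_def] .
  qed
  have nn: "\<And>x. x \<in> {\<xi>1<..<m} \<Longrightarrow> 0 \<le> a x - 1" using pt by force
  have i0: "h integrable_on {\<xi>1..m}" using hc integrable_continuous_interval by blast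
  have i1: "(\<lambda>x. (h x - h1) * (a x - 1)) integrable_on {\<xi>1..m}"
    by (rule int_prod[OF _ ai nn]) (intro continuous_intros hc)
  have i2: "(\<lambda>x. (h x * (b x - 1)) * (a x - 1)) integrable_on {\<xi>1..m}"
    by (rule int_prod[OF _ ai nn]) (intro continuous_intros hc bc)
  have i3: "(\<lambda>x. h x * (b x - 1)) integrable_on {\<xi>1..m}"
    by (rule integrable_continuous_interval) (intro continuous_intros hc bc)
  define E1 where "E1 = integral {\<xi>1..m} (\<lambda>x. (h x - h1) * (a x - 1))"
  define E2 where "E2 = integral {\<xi>1..m} (\<lambda>x. (h x * (b x - 1)) * (a x - 1))"
  define E3 where "E3 = integral {\<xi>1..m} (\<lambda>x. h x * (b x - 1))"
  have "((\<lambda>x. h x + h1 * (a x - 1) + (h x - h1) * (a x - 1) + (h x * (b x - 1)) * (a x - 1) + h x * (b x - 1))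
      has_integral (integral {\<xi>1..m} h + h1 * IA + E1 + E2 + E3)) {\<xi>1..m}"
    unfolding E1_def E2_def E3_def
    by (intro has_integral_add has_integral_mult_right IAi integrable_integral i0 i1 i2 i3)
  moreover have "(\<lambda>x. h x + h1 * (a x - 1) + (h x - h1) * (a x - 1) + (h x * (b x - 1)) * (a x - 1) + h x * (b x - 1))
      = (\<lambda>x. hh \<xi>3 x * aa \<xi>1 s x * bb \<xi>2 t x)"
    unfolding h_def a_def b_def by (rule ext) (simp add: algebra_simps)
  ultimately have HI: "((\<lambda>x. hh \<xi>3 x * aa \<xi>1 s x * bb \<xi>2 t x) has_integral (integral {\<xi>1..m} h + h1 * IA + E1 + E2 + E3)) {\<xi>1..m}"
    by simp
  have bE1: "\<bar>E1\<bar> \<le> (Lh * s / 2) * (m - \<xi>1)"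
    unfolding E1_def
  proof (rule int_bound_const[OF i1 mle(1)])
    fix x assume x: "x \<in> {\<xi>1<..<m}"
    have u: "0 < x - \<xi>1" using x by simp
    have p: "\<bar>h x - h1\<bar> \<le> Lh * (x - \<xi>1)" "0 \<le> a x - 1" "a x - 1 \<le> s / (2 * (x - \<xi>1))"
      using pt[OF x] by auto
    have "\<bar>(h x - h1) * (a x - 1)\<bar> = \<bar>h x - h1\<bar> * (a x - 1)" using p(2) by (simp add: abs_mult)
    also have "\<dots> \<le> (Lh * (x - \<xi>1)) * (s / (2 * (x - \<xi>1)))"
      by (rule mult_mono) (use p Lh u in auto)
    also have "\<dots> = Lh * s / 2" using u by (simp add: field_simps)
    finally show "\<bar>(h x - h1) * (a x - 1)\<bar> \<le> Lh * s / 2" .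
  qed
  have bE2: "\<bar>E2\<bar> \<le> integral {\<xi>1..m} (\<lambda>x. (H * t / L) * (a x - 1))"
    unfolding E2_def
  proof (rule int_bound_Ioo[OF i2])
    show "(\<lambda>x. (H * t / L) * (a x - 1)) integrable_on {\<xi>1..m}" using ai by (rule integrable_on_mult_right)
  next
    fix x assume x: "x \<in> {\<xi>1<..<m}"
    have p: "0 \<le> a x - 1" "0 < h x" "h x \<le> H" "0 \<le> 1 - b x" "1 - b x \<le> t / L"
      using pt[OF x] by auto
    have "\<bar>h x * (b x - 1) * (a x - 1)\<bar> = (h x * (1 - b x)) * (a x - 1)"
      using p by (simp add: abs_mult abs_minus_commute)
    also have "\<dots> \<le> (H * (t / L)) * (a x - 1)"
      by (intro mult_right_mono mult_mono) (use p in auto)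
    finally show "\<bar>h x * (b x - 1) * (a x - 1)\<bar> \<le> H * t / L * (a x - 1)" by simp
  qed
  have bE3: "\<bar>E3\<bar> \<le> (H * t / L) * (m - \<xi>1)"
    unfolding E3_def
  proof (rule int_bound_const[OF i3 mle(1)])
    fix x assume x: "x \<in> {\<xi>1<..<m}"
    have p: "0 < h x" "h x \<le> H" "0 \<le> 1 - b x" "1 - b x \<le> t / L"
      using pt[OF x] by auto
    have "\<bar>h x * (b x - 1)\<bar> = h x * (1 - b x)"
      using p by (simp add: abs_mult abs_minus_commute)
    also have "\<dots> \<le> H * (t / L)"
      by (intro mult_mono) (use p in auto)
    finally show "\<bar>h x * (b x - 1)\<bar> \<le> H * t / L" by simp
  qed
  have "integral {\<xi>1..m} (\<lambda>x. (H * t / L) * (a x - 1)) = (H * t / L) * IA"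
    using IAi by (simp add: integral_unique)
  moreover have "IA \<le> 1 + CA"
  proof -
    have "s / 2 * ln (1 / s) \<le> 1 / 2" using s_ln_le[OF st(1)] by simp
    moreover have "RA \<le> s * (1 / 2 + CA)" unfolding RA_def CA_def using RA_bound[OF st(1,2) L0] by simp
    moreover have "s * (1 / 2 + CA) \<le> 1 * (1 / 2 + CA)" using st CA0 by (intro mult_right_mono) auto
    ultimately show ?thesis unfolding IA_def by simp
  qed
  ultimately have bE2': "\<bar>E2\<bar> \<le> H / L * (1 + CA) * t"
  proof -
    assume e: "integral {\<xi>1..m} (\<lambda>x. (H * t / L) * (a x - 1)) = (H * t / L) * IA" and IA: "IA \<le> 1 + CA"
    have "(H * t / L) * IA \<le> (H * t / L) * (1 + CA)" using IA H0 st L0 by (intro mult_left_mono) auto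
    moreover have "(H * t / L) * (1 + CA) = H / L * (1 + CA) * t" by (simp add: field_simps)
    ultimately show ?thesis using bE2 e by linarith
  qed
  show ?thesis
  proof (intro exI conjI)
    show "((\<lambda>x. hh \<xi>3 x * aa \<xi>1 s x * bb \<xi>2 t x) has_integral
      (integral {\<xi>1..m} (hh \<xi>3) + hh \<xi>3 \<xi>1 * (s / 2 * ln (1 / s) + (sqrt L * sqrt (L + s) - L + s * ln (sqrt L + sqrt (L + s)))) + (E1 + E2 + E3))) {\<xi>1..m}"
      using HI unfolding h1_def h_def IA_def RA_def by (simp add: algebra_simps)
    have "\<bar>E1\<bar> \<le> Lh * L / 2 * (s + t)"
    proof -
      have "\<bar>E1\<bar> \<le> Lh * L / 2 * s" using bE1 mL by (simp add: field_simps)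
      also have "\<dots> \<le> Lh * L / 2 * (s + t)" using Lh L0 st by (intro mult_left_mono) auto
      finally show ?thesis .
    qed
    moreover have "\<bar>E2\<bar> \<le> H / L * (1 + CA) * (s + t)"
    proof -
      have "H / L * (1 + CA) * t \<le> H / L * (1 + CA) * (s + t)" using H0 L0 CA0 st by (intro mult_left_mono) auto
      thus ?thesis using bE2' by linarith
    qed
    moreover have "\<bar>E3\<bar> \<le> H * (s + t)"
    proof -
      have "\<bar>E3\<bar> \<le> H * t" using bE3 mL L0 by (simp add: field_simps)
      also have "\<dots> \<le> H * (s + t)" using H0 st by (intro mult_left_mono) auto
      finally show ?thesis .
    qed
    ultimately show "\<bar>E1 + E2 + E3\<bar> \<le> (Lh * L / 2 + H / L * (1 + (\<bar>ln (sqrt L)\<bar> + \<bar>ln (2 * sqrt (L + 1))\<bar>)) + H) * (s + t)"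
    proof -
      assume a1: "\<bar>E1\<bar> \<le> Lh * L / 2 * (s + t)" and a2: "\<bar>E2\<bar> \<le> H / L * (1 + CA) * (s + t)"
        and a3: "\<bar>E3\<bar> \<le> H * (s + t)"
      have d: "(Lh * L / 2 + H / L * (1 + CA) + H) * (s + t) = Lh * L / 2 * (s + t) + H / L * (1 + CA) * (s + t) + H * (s + t)"
        by (simp only: distrib_right)
      have "\<bar>E1 + E2 + E3\<bar> \<le> \<bar>E1\<bar> + \<bar>E2\<bar> + \<bar>E3\<bar>" by (metis abs_triangle_ineq add_mono order_trans order_refl)
      thus ?thesis unfolding CA_def[symmetric] d using a1 a2 a3 by linarith
    qed
  qed
qed

lemma right_part:
  assumes xi: "-1 < \<xi>1" "\<xi>1 < \<xi>2" "\<xi>2 < \<xi>3" "\<xi>3 < 1"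
    and hb: "\<And>x. x \<in> {\<xi>1..\<xi>2} \<Longrightarrow> 0 < hh \<xi>3 x \<and> hh \<xi>3 x \<le> H"
    and hl: "\<And>x y. x \<in> {\<xi>1..\<xi>2} \<Longrightarrow> y \<in> {\<xi>1..\<xi>2} \<Longrightarrow> \<bar>hh \<xi>3 x - hh \<xi>3 y\<bar> \<le> Lh * \<bar>x - y\<bar>"
    and Lh: "0 \<le> Lh"
    and m: "m = (\<xi>1 + \<xi>2) / 2" and L: "L = (\<xi>2 - \<xi>1) / 2"
    and st: "0 < s" "s < 1" "0 < t" "t < L"
  shows "\<exists>ER. ((\<lambda>x. hh \<xi>3 x * aa \<xi>1 s x * bb \<xi>2 t x) has_integral
      (integral {m..\<xi>2 - t} (hh \<xi>3) + hh \<xi>3 \<xi>2 * (- (t / 2 * ln (1 / t)) + (t + sqrt L * sqrt (L - t) - L - t * ln (sqrt L + sqrt (L - t)))) + ER)) {m..\<xi>2 - t}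
    \<and> \<bar>ER\<bar> \<le> (Lh * L + H / 2) * (s + t)"
proof -
  define h where "h = hh \<xi>3"
  define a where "a = aa \<xi>1 s"
  define b where "b = bb \<xi>2 t"
  define h2 where "h2 = h \<xi>2"
  define IB where "IB = - (t / 2 * ln (1 / t)) + (t + sqrt L * sqrt (L - t) - L - t * ln (sqrt L + sqrt (L - t)))"
  have L0: "0 < L" using L xi by simp
  have mL: "m - \<xi>1 = L" "\<xi>2 - m = L" using m L by simp_all
  have mle: "\<xi>1 \<le> m" "m \<le> \<xi>2 - t" "\<xi>2 - t \<le> \<xi>2" using m xi st mL by simp_all
  have H0: "0 < H" using hb[of \<xi>1] xi by force
  have IBi: "((\<lambda>x. b x - 1) has_integral IB) {m..\<xi>2 - t}"
  proof -
    have "m < \<xi>2 - t" using mL st by simp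
    from intB[OF st(3) this] show ?thesis unfolding IB_def b_def mL(2) by simp
  qed
  have pt: "1 \<le> a x \<and> a x - 1 \<le> s / (2 * L) \<and> 0 \<le> b x \<and> b x \<le> 1 \<and> 1 - b x \<le> t / (\<xi>2 - x) \<and> 0 < \<xi>2 - x
      \<and> 0 < h x \<and> h x \<le> H \<and> \<bar>h x - h2\<bar> \<le> Lh * (\<xi>2 - x)" if x: "x \<in> {m<..<\<xi>2 - t}" for x
  proof -
    have u: "0 < x - \<xi>1" "L \<le> x - \<xi>1" using x mL L0 by auto
    have ab: "1 \<le> a x" "a x - 1 \<le> s / (2 * (x - \<xi>1))"
      unfolding a_def aa_def using a_bounds[OF u(1), of s] st by auto
    have "s / (2 * (x - \<xi>1)) \<le> s / (2 * L)" using u L0 st by (intro divide_left_mono) auto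
    have v: "t < \<xi>2 - x" using x by auto
    have e: "\<xi>2 - t - x = \<xi>2 - x - t" by simp
    have bb: "0 \<le> b x" "b x \<le> 1" "1 - b x \<le> t / (\<xi>2 - x)"
      unfolding b_def bb_def e using b_bounds[of t "\<xi>2 - x"] v st by auto
    moreover have xr: "x \<in> {\<xi>1..\<xi>2}" "\<xi>2 \<in> {\<xi>1..\<xi>2}" using x mle xi by auto
    moreover have "\<bar>h x - h2\<bar> \<le> Lh * (\<xi>2 - x)" unfolding h_def h2_def using hl[OF xr] v st by simp
    ultimately show ?thesis using ab bb hb[OF xr(1)] v st \<open>s / (2 * (x - \<xi>1)) \<le> s / (2 * L)\<close> unfolding h_def by auto
  qed
  have hc: "continuous_on {m..\<xi>2 - t} h" unfolding h_def by (rule hh_cont[OF xi]) (use mle in auto)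
  have bc: "continuous_on {m..\<xi>2 - t} b"
  proof -
    have "continuous_on {m..\<xi>2 - t} (\<lambda>x. sqrt (\<xi>2 - t - x) / sqrt (\<xi>2 - x))"
      by (intro continuous_intros) (use mle st mL in auto)
    thus ?thesis unfolding b_def bb_def[abs_def] .
  qed
  have ac: "continuous_on {m..\<xi>2 - t} a"
  proof -
    have "continuous_on {m..\<xi>2 - t} (\<lambda>x. sqrt (x - \<xi>1 + s) / sqrt (x - \<xi>1))"
      by (intro continuous_intros) (use mle st mL L0 in auto)
    thus ?thesis unfolding a_def aa_def[abs_def] .
  qed
  have i0: "h integrable_on {m..\<xi>2 - t}" using hc integrable_continuous_interval by blast
  have i4: "(\<lambda>x. (h x - h2) * (b x - 1)) integrable_on {m..\<xi>2 - t}"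
    by (rule integrable_continuous_interval) (intro continuous_intros hc bc)
  have i5: "(\<lambda>x. h x * b x * (a x - 1)) integrable_on {m..\<xi>2 - t}"
    by (rule integrable_continuous_interval) (intro continuous_intros hc bc ac)
  define E4 where "E4 = integral {m..\<xi>2 - t} (\<lambda>x. (h x - h2) * (b x - 1))"
  define E5 where "E5 = integral {m..\<xi>2 - t} (\<lambda>x. h x * b x * (a x - 1))"
  have "((\<lambda>x. h x + h2 * (b x - 1) + (h x - h2) * (b x - 1) + h x * b x * (a x - 1))
      has_integral (integral {m..\<xi>2 - t} h + h2 * IB + E4 + E5)) {m..\<xi>2 - t}"
    unfolding E4_def E5_def
    by (intro has_integral_add has_integral_mult_right IBi integrable_integral i0 i4 i5)
  moreover have "(\<lambda>x. h x + h2 * (b x - 1) + (h x - h2) * (b x - 1) + h x * b x * (a x - 1))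
      = (\<lambda>x. hh \<xi>3 x * aa \<xi>1 s x * bb \<xi>2 t x)"
    unfolding h_def a_def b_def by (rule ext) (simp add: algebra_simps)
  ultimately have HI: "((\<lambda>x. hh \<xi>3 x * aa \<xi>1 s x * bb \<xi>2 t x) has_integral (integral {m..\<xi>2 - t} h + h2 * IB + E4 + E5)) {m..\<xi>2 - t}"
    by simp
  have bE4: "\<bar>E4\<bar> \<le> (Lh * t) * (\<xi>2 - t - m)"
    unfolding E4_def
  proof (rule int_bound_const[OF i4 mle(2)])
    fix x assume x: "x \<in> {m<..<\<xi>2 - t}"
    have p: "\<bar>h x - h2\<bar> \<le> Lh * (\<xi>2 - x)" "0 \<le> 1 - b x" "1 - b x \<le> t / (\<xi>2 - x)" "0 < \<xi>2 - x"
      using pt[OF x] by auto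
    have "\<bar>(h x - h2) * (b x - 1)\<bar> = \<bar>h x - h2\<bar> * (1 - b x)" using p(2) by (simp add: abs_mult)
    also have "\<dots> \<le> (Lh * (\<xi>2 - x)) * (t / (\<xi>2 - x))"
      by (rule mult_mono) (use p Lh in auto)
    also have "\<dots> = Lh * t" using p(4) by (simp add: field_simps)
    finally show "\<bar>(h x - h2) * (b x - 1)\<bar> \<le> Lh * t" .
  qed
  have bE5: "\<bar>E5\<bar> \<le> (H * (s / (2 * L))) * (\<xi>2 - t - m)"
    unfolding E5_def
  proof (rule int_bound_const[OF i5 mle(2)])
    fix x assume x: "x \<in> {m<..<\<xi>2 - t}"
    have p: "0 \<le> a x - 1" "a x - 1 \<le> s / (2 * L)" "0 < h x" "h x \<le> H" "0 \<le> b x" "b x \<le> 1"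
      using pt[OF x] by auto
    have "\<bar>h x * b x * (a x - 1)\<bar> = h x * b x * (a x - 1)" using p by (simp add: abs_mult)
    also have "\<dots> \<le> (H * 1) * (s / (2 * L))"
      by (intro mult_mono) (use p in auto)
    finally show "\<bar>h x * b x * (a x - 1)\<bar> \<le> H * (s / (2 * L))" by simp
  qed
  show ?thesis
  proof (intro exI conjI)
    show "((\<lambda>x. hh \<xi>3 x * aa \<xi>1 s x * bb \<xi>2 t x) has_integral
      (integral {m..\<xi>2 - t} (hh \<xi>3) + hh \<xi>3 \<xi>2 * (- (t / 2 * ln (1 / t)) + (t + sqrt L * sqrt (L - t) - L - t * ln (sqrt L + sqrt (L - t)))) + (E4 + E5))) {m..\<xi>2 - t}"
      using HI unfolding h2_def h_def IB_def by (simp add: algebra_simps)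
    have len: "\<xi>2 - t - m \<le> L" "0 \<le> \<xi>2 - t - m" using mL st by auto
    have a4: "\<bar>E4\<bar> \<le> Lh * L * (s + t)"
    proof -
      have "(Lh * t) * (\<xi>2 - t - m) \<le> (Lh * t) * L" using len Lh st by (intro mult_left_mono) auto
      also have "\<dots> \<le> Lh * L * (s + t)" using Lh L0 st by (simp add: algebra_simps mult_left_mono)
      finally show ?thesis using bE4 by linarith
    qed
    have a5: "\<bar>E5\<bar> \<le> H / 2 * (s + t)"
    proof -
      have "(H * (s / (2 * L))) * (\<xi>2 - t - m) \<le> (H * (s / (2 * L))) * L" using len H0 st L0 by (intro mult_left_mono) auto
      also have "\<dots> = H / 2 * s" using L0 by (simp add: field_simps)
      also have "\<dots> \<le> H / 2 * (s + t)" using H0 st by (intro mult_left_mono) auto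
      finally show ?thesis using bE5 by linarith
    qed
    have d: "(Lh * L + H / 2) * (s + t) = Lh * L * (s + t) + H / 2 * (s + t)" by (simp only: distrib_right)
    have "\<bar>E4 + E5\<bar> \<le> \<bar>E4\<bar> + \<bar>E5\<bar>" by (rule abs_triangle_ineq)
    thus "\<bar>E4 + E5\<bar> \<le> (Lh * L + H / 2) * (s + t)" unfolding d using a4 a5 by linarith
  qed
qed

lemma main_est:
  assumes xi: "-1 < \<xi>1" "\<xi>1 < \<xi>2" "\<xi>2 < \<xi>3" "\<xi>3 < 1"
  shows "\<exists>\<delta>>0. \<exists>K. \<forall>s t. 0 < s \<longrightarrow> s < \<delta> \<longrightarrow> 0 < t \<longrightarrow> t < \<delta> \<longrightarrow>
    (\<exists>E. Qfun \<xi>1 \<xi>2 \<xi>3 s t - Qfun \<xi>1 \<xi>2 \<xi>3 0 0 =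
       complex_of_real (-1 / (2 * sqrt (1 - \<xi>2) * sqrt (1 + \<xi>2) * sqrt (\<xi>3 - \<xi>2)) * (t * ln (1/t))
         + 1 / (2 * sqrt (1 - \<xi>1) * sqrt (1 + \<xi>1) * sqrt (\<xi>3 - \<xi>1)) * (s * ln (1/s)) + E)
     \<and> \<bar>E\<bar> \<le> K * (s + t))"
proof -
  obtain H Lh where hb: "\<And>x. x \<in> {\<xi>1..\<xi>2} \<Longrightarrow> 0 < hh \<xi>3 x \<and> hh \<xi>3 x \<le> H"
    and hl: "\<And>x y. x \<in> {\<xi>1..\<xi>2} \<Longrightarrow> y \<in> {\<xi>1..\<xi>2} \<Longrightarrow> \<bar>hh \<xi>3 x - hh \<xi>3 y\<bar> \<le> Lh * \<bar>x - y\<bar>"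
    and Lh: "0 \<le> Lh" and H0: "0 < H"
    using hh_props[OF xi] by blast
  define m where "m = (\<xi>1 + \<xi>2) / 2"
  define L where "L = (\<xi>2 - \<xi>1) / 2"
  define CA where "CA = \<bar>ln (sqrt L)\<bar> + \<bar>ln (2 * sqrt (L + 1))\<bar>"
  define CB where "CB = \<bar>ln (sqrt L)\<bar> + \<bar>ln (2 * sqrt L)\<bar>"
  define K where "K = (Lh * L / 2 + H / L * (1 + CA) + H) + (Lh * L + H / 2) + H * (1 / 2 + CA) + H * (2 + CB) + H"
  have L0: "0 < L" using xi L_def by simp
  have mL: "m - \<xi>1 = L" "\<xi>2 - m = L" using m_def L_def by simp_all
  have hc: "continuous_on {\<xi>1..\<xi>2} (hh \<xi>3)" by (rule hh_cont[OF xi]) auto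
  have hI: "hh \<xi>3 integrable_on {\<xi>1..\<xi>2}" using hc integrable_continuous_interval by blast
  have Q0: "Qfun \<xi>1 \<xi>2 \<xi>3 0 0 = complex_of_real (integral {\<xi>1..\<xi>2} (hh \<xi>3))"
  proof -
    have int1: "((\<lambda>x. - complex_of_real (hh \<xi>3 x)) has_integral - complex_of_real (integral {\<xi>1..\<xi>2} (hh \<xi>3))) {\<xi>1..\<xi>2}"
      by (intro has_integral_neg has_integral_of_real integrable_integral hI)
    have eq: "gfun \<xi>1 \<xi>2 \<xi>3 0 0 x = - complex_of_real (hh \<xi>3 x)" if x: "x \<in> {\<xi>1..\<xi>2} - {\<xi>1, \<xi>2}" for x
    proof -
      have "\<xi>1 < x" "x < \<xi>2 - 0" using x by auto
      from gfun_eval[OF xi _ _ this] have "gfun \<xi>1 \<xi>2 \<xi>3 0 0 x = - complex_of_real (hh \<xi>3 x * aa \<xi>1 0 x * bb \<xi>2 0 x)" by simp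
      moreover have "aa \<xi>1 0 x = 1" "bb \<xi>2 0 x = 1" using x unfolding aa_def bb_def by auto
      ultimately show ?thesis by simp
    qed
    have "(gfun \<xi>1 \<xi>2 \<xi>3 0 0 has_integral - complex_of_real (integral {\<xi>1..\<xi>2} (hh \<xi>3))) {\<xi>1..\<xi>2}"
      by (rule has_integral_spike_finite[of "{\<xi>1, \<xi>2}", OF _ eq int1]) auto
    thus ?thesis unfolding Qfun_def by (simp add: integral_unique)
  qed
  have main: "\<forall>s t. 0 < s \<longrightarrow> s < min 1 L \<longrightarrow> 0 < t \<longrightarrow> t < min 1 L \<longrightarrow>
    (\<exists>E. Qfun \<xi>1 \<xi>2 \<xi>3 s t - Qfun \<xi>1 \<xi>2 \<xi>3 0 0 =
       complex_of_real (-1 / (2 * sqrt (1 - \<xi>2) * sqrt (1 + \<xi>2) * sqrt (\<xi>3 - \<xi>2)) * (t * ln (1/t))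
         + 1 / (2 * sqrt (1 - \<xi>1) * sqrt (1 + \<xi>1) * sqrt (\<xi>3 - \<xi>1)) * (s * ln (1/s)) + E)
     \<and> \<bar>E\<bar> \<le> K * (s + t))"
  proof (intro allI impI)
    fix s t :: real assume s0: "0 < s" and s1: "s < min 1 L" and t0: "0 < t" and t1: "t < min 1 L"
    have st: "0 < s" "s < 1" "0 < t" "t < L" using s0 s1 t0 t1 by auto
    obtain EL where EL: "((\<lambda>x. hh \<xi>3 x * aa \<xi>1 s x * bb \<xi>2 t x) has_integral
      (integral {\<xi>1..m} (hh \<xi>3) + hh \<xi>3 \<xi>1 * (s / 2 * ln (1 / s) + (sqrt L * sqrt (L + s) - L + s * ln (sqrt L + sqrt (L + s)))) + EL)) {\<xi>1..m}"
      and bEL: "\<bar>EL\<bar> \<le> (Lh * L / 2 + H / L * (1 + CA) + H) * (s + t)"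
      using left_part[OF xi hb hl Lh m_def L_def st] unfolding CA_def by blast
    obtain ER where ER: "((\<lambda>x. hh \<xi>3 x * aa \<xi>1 s x * bb \<xi>2 t x) has_integral
      (integral {m..\<xi>2 - t} (hh \<xi>3) + hh \<xi>3 \<xi>2 * (- (t / 2 * ln (1 / t)) + (t + sqrt L * sqrt (L - t) - L - t * ln (sqrt L + sqrt (L - t)))) + ER)) {m..\<xi>2 - t}"
      and bER: "\<bar>ER\<bar> \<le> (Lh * L + H / 2) * (s + t)"
      using right_part[OF xi hb hl Lh m_def L_def st] by blast
    define RA where "RA = sqrt L * sqrt (L + s) - L + s * ln (sqrt L + sqrt (L + s))"
    define RB where "RB = t + sqrt L * sqrt (L - t) - L - t * ln (sqrt L + sqrt (L - t))"
    define VL where "VL = integral {\<xi>1..m} (hh \<xi>3) + hh \<xi>3 \<xi>1 * (s / 2 * ln (1 / s) + RA) + EL"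
    define VR where "VR = integral {m..\<xi>2 - t} (hh \<xi>3) + hh \<xi>3 \<xi>2 * (- (t / 2 * ln (1 / t)) + RB) + ER"
    have ml: "\<xi>1 \<le> m" "m \<le> \<xi>2 - t" "\<xi>2 - t \<le> \<xi>2" "m \<le> \<xi>2" using mL st by auto
    have fI: "((\<lambda>x. hh \<xi>3 x * aa \<xi>1 s x * bb \<xi>2 t x) has_integral (VL + VR)) {\<xi>1..\<xi>2 - t}"
      unfolding VL_def VR_def RA_def RB_def by (rule has_integral_combine[OF ml(1,2) EL ER])
    have Qst: "Qfun \<xi>1 \<xi>2 \<xi>3 s t = complex_of_real (VL + VR)"
    proof -
      have int1: "((\<lambda>x. - complex_of_real (hh \<xi>3 x * aa \<xi>1 s x * bb \<xi>2 t x)) has_integral - complex_of_real (VL + VR)) {\<xi>1..\<xi>2 - t}"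
        by (intro has_integral_neg has_integral_of_real fI)
      have eq: "gfun \<xi>1 \<xi>2 \<xi>3 s t x = - complex_of_real (hh \<xi>3 x * aa \<xi>1 s x * bb \<xi>2 t x)"
        if x: "x \<in> {\<xi>1..\<xi>2 - t} - {\<xi>1, \<xi>2 - t}" for x
      proof -
        have "\<xi>1 < x" "x < \<xi>2 - t" using x by auto
        from gfun_eval[OF xi _ _ this] st show ?thesis by simp
      qed
      have "(gfun \<xi>1 \<xi>2 \<xi>3 s t has_integral - complex_of_real (VL + VR)) {\<xi>1..\<xi>2 - t}"
        by (rule has_integral_spike_finite[of "{\<xi>1, \<xi>2 - t}", OF _ eq int1]) auto
      thus ?thesis unfolding Qfun_def by (simp add: integral_unique)
    qed
    have hI2: "hh \<xi>3 integrable_on {m..\<xi>2}" by (rule integrable_subinterval_real[OF hI]) (use ml in auto)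
    have hI3: "hh \<xi>3 integrable_on {\<xi>2 - t..\<xi>2}" by (rule integrable_subinterval_real[OF hI]) (use ml st mL in auto)
    define E6 where "E6 = integral {\<xi>2 - t..\<xi>2} (hh \<xi>3)"
    have split: "integral {\<xi>1..\<xi>2} (hh \<xi>3) = integral {\<xi>1..m} (hh \<xi>3) + integral {m..\<xi>2 - t} (hh \<xi>3) + E6"
      using Henstock_Kurzweil_Integration.integral_combine[OF ml(1) ml(4) hI] Henstock_Kurzweil_Integration.integral_combine[OF ml(2) ml(3) hI2] unfolding E6_def by simp
    have bE6: "\<bar>E6\<bar> \<le> H * (\<xi>2 - (\<xi>2 - t))" unfolding E6_def
    proof (rule int_bound_const[OF hI3 ml(3)])
      fix x assume "x \<in> {\<xi>2 - t<..<\<xi>2}"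
      hence "x \<in> {\<xi>1..\<xi>2}" using ml mL st by auto
      from hb[OF this] show "\<bar>hh \<xi>3 x\<bar> \<le> H" by simp
    qed
    have c1: "1 / (2 * sqrt (1 - \<xi>1) * sqrt (1 + \<xi>1) * sqrt (\<xi>3 - \<xi>1)) = hh \<xi>3 \<xi>1 / 2"
      by (simp add: hh_def)
    have c2: "-1 / (2 * sqrt (1 - \<xi>2) * sqrt (1 + \<xi>2) * sqrt (\<xi>3 - \<xi>2)) = - (hh \<xi>3 \<xi>2 / 2)"
      by (simp add: hh_def)
    define E where "E = hh \<xi>3 \<xi>1 * RA + hh \<xi>3 \<xi>2 * RB + EL + ER - E6"
    show "\<exists>E. Qfun \<xi>1 \<xi>2 \<xi>3 s t - Qfun \<xi>1 \<xi>2 \<xi>3 0 0 =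
       complex_of_real (-1 / (2 * sqrt (1 - \<xi>2) * sqrt (1 + \<xi>2) * sqrt (\<xi>3 - \<xi>2)) * (t * ln (1/t))
         + 1 / (2 * sqrt (1 - \<xi>1) * sqrt (1 + \<xi>1) * sqrt (\<xi>3 - \<xi>1)) * (s * ln (1/s)) + E)
     \<and> \<bar>E\<bar> \<le> K * (s + t)"
    proof (intro exI[of _ E] conjI)
      have "VL + VR - integral {\<xi>1..\<xi>2} (hh \<xi>3) = - (hh \<xi>3 \<xi>2 / 2) * (t * ln (1/t)) + hh \<xi>3 \<xi>1 / 2 * (s * ln (1/s)) + E"
        unfolding split VL_def VR_def E_def by (simp add: algebra_simps)
      thus "Qfun \<xi>1 \<xi>2 \<xi>3 s t - Qfun \<xi>1 \<xi>2 \<xi>3 0 0 =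
       complex_of_real (-1 / (2 * sqrt (1 - \<xi>2) * sqrt (1 + \<xi>2) * sqrt (\<xi>3 - \<xi>2)) * (t * ln (1/t))
         + 1 / (2 * sqrt (1 - \<xi>1) * sqrt (1 + \<xi>1) * sqrt (\<xi>3 - \<xi>1)) * (s * ln (1/s)) + E)"
        unfolding Qst Q0 c1 c2 by (metis of_real_diff)
      have h1: "0 < hh \<xi>3 \<xi>1" "hh \<xi>3 \<xi>1 \<le> H" using hb[of \<xi>1] xi by auto
      have h2: "0 < hh \<xi>3 \<xi>2" "hh \<xi>3 \<xi>2 \<le> H" using hb[of \<xi>2] xi by auto
      have rA: "\<bar>RA\<bar> \<le> s * (1 / 2 + CA)" unfolding RA_def CA_def using RA_bound[OF st(1,2) L0] .
      have rB: "\<bar>RB\<bar> \<le> t * (2 + CB)" unfolding RB_def CB_def using RB_bound[OF st(3,4)] .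
      have CA0: "0 \<le> CA" "0 \<le> CB" unfolding CA_def CB_def by simp_all
      have b1: "\<bar>hh \<xi>3 \<xi>1 * RA\<bar> \<le> H * (1 / 2 + CA) * (s + t)"
      proof -
        have "\<bar>hh \<xi>3 \<xi>1 * RA\<bar> = hh \<xi>3 \<xi>1 * \<bar>RA\<bar>" using h1 by (simp add: abs_mult)
        also have "\<dots> \<le> H * (s * (1 / 2 + CA))" using h1 rA by (intro mult_mono) auto
        also have "\<dots> \<le> H * ((s + t) * (1 / 2 + CA))" using H0 CA0 st by (intro mult_left_mono mult_right_mono) auto
        finally show ?thesis by (simp add: algebra_simps)
      qed
      have b2: "\<bar>hh \<xi>3 \<xi>2 * RB\<bar> \<le> H * (2 + CB) * (s + t)"
      proof -
        have "\<bar>hh \<xi>3 \<xi>2 * RB\<bar> = hh \<xi>3 \<xi>2 * \<bar>RB\<bar>" using h2 by (simp add: abs_mult)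
        also have "\<dots> \<le> H * (t * (2 + CB))" using h2 rB by (intro mult_mono) auto
        also have "\<dots> \<le> H * ((s + t) * (2 + CB))" using H0 CA0 st by (intro mult_left_mono mult_right_mono) auto
        finally show ?thesis by (simp add: algebra_simps)
      qed
      have b6: "\<bar>E6\<bar> \<le> H * (s + t)"
      proof -
        have "H * (\<xi>2 - (\<xi>2 - t)) \<le> H * (s + t)" using H0 st by (intro mult_left_mono) auto
        thus ?thesis using bE6 by linarith
      qed
      have d: "K * (s + t) = (Lh * L / 2 + H / L * (1 + CA) + H) * (s + t) + (Lh * L + H / 2) * (s + t)
          + H * (1 / 2 + CA) * (s + t) + H * (2 + CB) * (s + t) + H * (s + t)"
        unfolding K_def by (simp only: distrib_right)
      have tri: "\<bar>E\<bar> \<le> \<bar>hh \<xi>3 \<xi>1 * RA\<bar> + \<bar>hh \<xi>3 \<xi>2 * RB\<bar> + \<bar>EL\<bar> + \<bar>ER\<bar> + \<bar>E6\<bar>"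
        unfolding E_def by linarith
      show "\<bar>E\<bar> \<le> K * (s + t)" unfolding d using tri b1 b2 b6 bEL bER by linarith
    qed
  qed
have "0 < min 1 L" using L0 by simp
  with main show ?thesis by blast
qed

lemma lim_aux: "((\<lambda>s::real. K / ln (1 / s)) \<longlongrightarrow> 0) (at_right 0)"
  by real_asymp

theorem proposition4p5:
  fixes \<xi>1 \<xi>2 \<xi>3 :: real
  assumes "-1 < \<xi>1" and "\<xi>1 < \<xi>2" and "\<xi>2 < \<xi>3" and "\<xi>3 < 1"
  defines "F \<equiv> at (0::real, 0::real) within {p. fst p > 0 \<and> snd p > 0}"
  shows "\<exists>e1 e2 e3 e4 :: real \<times> real \<Rightarrow> complex.
     (e1 \<longlongrightarrow> 0) F \<and> (e2 \<longlongrightarrow> 0) F \<and>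
     (\<exists>C. eventually (\<lambda>(s,t). norm (e3 (s,t)) \<le> C * t) F) \<and>
     (\<exists>C. eventually (\<lambda>(s,t). norm (e4 (s,t)) * ln (1/s) \<le> C) F) \<and>
     eventually (\<lambda>(s,t).
        Qfun \<xi>1 \<xi>2 \<xi>3 s t - Qfun \<xi>1 \<xi>2 \<xi>3 0 0 =
          complex_of_real (-1 / (2 * sqrt (1 - \<xi>2) * sqrt (1 + \<xi>2) * sqrt (\<xi>3 - \<xi>2)) * (t * ln (1/t)))
        + complex_of_real (1 / (2 * sqrt (1 - \<xi>1) * sqrt (1 + \<xi>1) * sqrt (\<xi>3 - \<xi>1)) * (s * ln (1/s)))
        + e1 (s,t) * complex_of_real (s * ln (1/s))
        + e2 (s,t) * complex_of_real (t * ln (1/t))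
        + e3 (s,t) * complex_of_real (s * ln (1/s))
        + e4 (s,t) * complex_of_real (t * ln (1/t))) F"
proof -
  note xi = assms(1-4)
  obtain \<delta> K where d0: "\<delta> > 0" and main: "\<And>s t. 0 < s \<Longrightarrow> s < \<delta> \<Longrightarrow> 0 < t \<Longrightarrow> t < \<delta> \<Longrightarrow>
    (\<exists>E. Qfun \<xi>1 \<xi>2 \<xi>3 s t - Qfun \<xi>1 \<xi>2 \<xi>3 0 0 =
       complex_of_real (-1 / (2 * sqrt (1 - \<xi>2) * sqrt (1 + \<xi>2) * sqrt (\<xi>3 - \<xi>2)) * (t * ln (1/t))
         + 1 / (2 * sqrt (1 - \<xi>1) * sqrt (1 + \<xi>1) * sqrt (\<xi>3 - \<xi>1)) * (s * ln (1/s)) + E)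
     \<and> \<bar>E\<bar> \<le> K * (s + t))"
    using main_est[OF xi] by blast
  define c1 where "c1 = -1 / (2 * sqrt (1 - \<xi>2) * sqrt (1 + \<xi>2) * sqrt (\<xi>3 - \<xi>2))"
  define c2 where "c2 = 1 / (2 * sqrt (1 - \<xi>1) * sqrt (1 + \<xi>1) * sqrt (\<xi>3 - \<xi>1))"
  define D where "D = (\<lambda>p. Qfun \<xi>1 \<xi>2 \<xi>3 (fst p) (snd p) - Qfun \<xi>1 \<xi>2 \<xi>3 0 0
      - complex_of_real (c1 * (snd p * ln (1 / snd p)) + c2 * (fst p * ln (1 / fst p))))"
  define e1 where "e1 = (\<lambda>p. D p / complex_of_real ((fst p + snd p) * ln (1 / fst p)))"
  define e2 where "e2 = (\<lambda>p. D p / complex_of_real ((fst p + snd p) * ln (1 / snd p)))"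
  define G where "G = (\<lambda>p::real \<times> real. 0 < fst p \<and> fst p < min 1 \<delta> \<and> 0 < snd p \<and> snd p < min 1 \<delta>)"
  have fstl: "((\<lambda>p. fst p) \<longlongrightarrow> 0) F" unfolding F_def
    using tendsto_fst[OF tendsto_ident_at[of "(0::real, 0::real)"]] by simp
  have sndl: "((\<lambda>p. snd p) \<longlongrightarrow> 0) F" unfolding F_def
    using tendsto_snd[OF tendsto_ident_at[of "(0::real, 0::real)"]] by simp
  have evS: "eventually (\<lambda>p. 0 < fst p \<and> 0 < snd p) F"
    unfolding F_def eventually_at_filter by simp
  have md: "0 < min 1 \<delta>" using d0 by simp
  have evG: "eventually G F"
  proof -
    have "eventually (\<lambda>p. fst p < min 1 \<delta>) F" using order_tendstoD(2)[OF fstl md] .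
    moreover have "eventually (\<lambda>p. snd p < min 1 \<delta>) F" using order_tendstoD(2)[OF sndl md] .
    ultimately show ?thesis using evS unfolding G_def by eventually_elim auto
  qed
  have Dbound: "norm (D p) \<le> K * (fst p + snd p)" if "G p" for p
  proof -
    from that have "0 < fst p" "fst p < \<delta>" "0 < snd p" "snd p < \<delta>" unfolding G_def by auto
    from main[OF this] obtain E where E: "Qfun \<xi>1 \<xi>2 \<xi>3 (fst p) (snd p) - Qfun \<xi>1 \<xi>2 \<xi>3 0 0 =
       complex_of_real (c1 * (snd p * ln (1/snd p)) + c2 * (fst p * ln (1/fst p)) + E)" and "\<bar>E\<bar> \<le> K * (fst p + snd p)"
      unfolding c1_def c2_def by blast
    moreover have "D p = complex_of_real E" unfolding D_def E by simp
    ultimately show ?thesis by simp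
  qed
  have e1b: "norm (e1 p) \<le> K / ln (1 / fst p)" if "G p" for p
  proof -
    from that have p: "0 < fst p" "fst p < 1" "0 < snd p" unfolding G_def by auto
    have l: "0 < ln (1 / fst p)" using p by simp
    have "norm (e1 p) = norm (D p) / ((fst p + snd p) * ln (1 / fst p))"
      unfolding e1_def norm_divide norm_of_real using p l by simp
    also have "\<dots> \<le> K * (fst p + snd p) / ((fst p + snd p) * ln (1 / fst p))"
      using Dbound[OF that] p l by (intro divide_right_mono) auto
    also have "\<dots> = K / ln (1 / fst p)"
    proof -
      have c: "\<And>A l. A \<noteq> 0 \<Longrightarrow> l \<noteq> 0 \<Longrightarrow> K * A / (A * l) = K / (l::real)" by simp
      show ?thesis by (rule c) (use p l in linarith)+
    qed
    finally show ?thesis .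
  qed
  have e2b: "norm (e2 p) \<le> K / ln (1 / snd p)" if "G p" for p
  proof -
    from that have p: "0 < fst p" "snd p < 1" "0 < snd p" unfolding G_def by auto
    have l: "0 < ln (1 / snd p)" using p by simp
    have "norm (e2 p) = norm (D p) / ((fst p + snd p) * ln (1 / snd p))"
      unfolding e2_def norm_divide norm_of_real using p l by simp
    also have "\<dots> \<le> K * (fst p + snd p) / ((fst p + snd p) * ln (1 / snd p))"
      using Dbound[OF that] p l by (intro divide_right_mono) auto
    also have "\<dots> = K / ln (1 / snd p)"
    proof -
      have c: "\<And>A l. A \<noteq> 0 \<Longrightarrow> l \<noteq> 0 \<Longrightarrow> K * A / (A * l) = K / (l::real)" by simp
      show ?thesis by (rule c) (use p l in linarith)+
    qed
    finally show ?thesis .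
  qed
  have fstr: "filterlim (\<lambda>p. fst p) (at_right 0) F"
    by (rule tendsto_imp_filterlim_at_right[OF fstl]) (use evS in \<open>eventually_elim, auto\<close>)
  have sndr: "filterlim (\<lambda>p. snd p) (at_right 0) F"
    by (rule tendsto_imp_filterlim_at_right[OF sndl]) (use evS in \<open>eventually_elim, auto\<close>)
  have g1: "((\<lambda>p. K / ln (1 / fst p)) \<longlongrightarrow> 0) F"
    using filterlim_compose[OF lim_aux[of K] fstr] .
  have g2: "((\<lambda>p. K / ln (1 / snd p)) \<longlongrightarrow> 0) F"
    using filterlim_compose[OF lim_aux[of K] sndr] .
  have l1: "(e1 \<longlongrightarrow> 0) F"
    by (rule Lim_null_comparison[OF eventually_mono[OF evG e1b] g1])
  have l2: "(e2 \<longlongrightarrow> 0) F"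
    by (rule Lim_null_comparison[OF eventually_mono[OF evG e2b] g2])
  have eq: "eventually (\<lambda>(s,t).
        Qfun \<xi>1 \<xi>2 \<xi>3 s t - Qfun \<xi>1 \<xi>2 \<xi>3 0 0 =
          complex_of_real (c1 * (t * ln (1/t)))
        + complex_of_real (c2 * (s * ln (1/s)))
        + e1 (s,t) * complex_of_real (s * ln (1/s))
        + e2 (s,t) * complex_of_real (t * ln (1/t))
        + 0 * complex_of_real (s * ln (1/s))
        + 0 * complex_of_real (t * ln (1/t))) F"
    using evG
  proof eventually_elim
    case (elim p)
    obtain s t where pst: "p = (s, t)" by (cases p)
    have p: "0 < s" "s < 1" "0 < t" "t < 1" using elim unfolding G_def pst by auto
    have l: "0 < ln (1 / s)" "0 < ln (1 / t)" using p by simp_all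
    have "e1 (s,t) * complex_of_real (s * ln (1/s)) + e2 (s,t) * complex_of_real (t * ln (1/t))
        = D (s,t) * (complex_of_real (s * ln (1/s)) / complex_of_real ((s + t) * ln (1 / s))
          + complex_of_real (t * ln (1/t)) / complex_of_real ((s + t) * ln (1 / t)))"
    proof -
      have a: "complex_of_real s + complex_of_real t \<noteq> 0"
        using p by (metis of_real_add of_real_eq_0_iff add_pos_pos less_irrefl)
      have b: "complex_of_real (ln (1/s)) \<noteq> 0" "complex_of_real (ln (1/t)) \<noteq> 0" using l by simp_all
      show ?thesis unfolding e1_def e2_def using a b by (simp add: field_simps)
    qed
    also have "complex_of_real (s * ln (1/s)) / complex_of_real ((s + t) * ln (1 / s))
          + complex_of_real (t * ln (1/t)) / complex_of_real ((s + t) * ln (1 / t)) = 1"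
    proof -
      have "s * ln (1/s) / ((s + t) * ln (1 / s)) + t * ln (1/t) / ((s + t) * ln (1 / t)) = 1"
      proof -
        have c: "\<And>A B l. A \<noteq> 0 \<Longrightarrow> l \<noteq> 0 \<Longrightarrow> B * l / (A * l) = B / (A::real)" by simp
        have "s * ln (1/s) / ((s + t) * ln (1 / s)) = s / (s + t)" by (rule c) (use p l in linarith)+
        moreover have "t * ln (1/t) / ((s + t) * ln (1 / t)) = t / (s + t)" by (rule c) (use p l in linarith)+
        moreover have "s / (s + t) + t / (s + t) = 1" using p by (simp add: add_divide_distrib[symmetric])
        ultimately show ?thesis by simp
      qed
      thus ?thesis by (metis of_real_1 of_real_add of_real_divide)
    qed
    finally have "e1 (s,t) * complex_of_real (s * ln (1/s)) + e2 (s,t) * complex_of_real (t * ln (1/t)) = D (s,t)"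
      by simp
    thus ?case unfolding pst D_def by (simp add: algebra_simps)
  qed
  show ?thesis
    apply (rule exI[of _ e1], rule exI[of _ e2], rule exI[of _ "\<lambda>_. 0"], rule exI[of _ "\<lambda>_. 0"])
    apply (intro conjI)
    subgoal by (rule l1)
    subgoal by (rule l2)
    subgoal by (rule exI[of _ 0]) (simp add: case_prod_unfold)
    subgoal by (rule exI[of _ 0]) (simp add: case_prod_unfold)
    subgoal using eq unfolding c1_def c2_def by simp
    done
qed

end
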